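(* For every integer $r>0$ and every integer $n\ge 1$, \[B_{n-1,r}\,B_{n+1,r}\ge B_{n,r}^2.\]
   Context: For integers $n\ge k\ge r\ge 0$, the $r$-Stirling number of the second kind $\genfrac\{\}{0pt}{}{n}{k}_r$ is the number of partitions of the set $\{1,2,\dots,n\}$ into $k$ nonempty, pairwise disjoint subsets such that the elements $1,\dots,r$ lie in distinct subsets (it is taken to be $0$ when $k>n$). The $r$-Bell numbers are $B_{n,r}=\sum_{k=0}^n\genfrac\{\}{0pt}{}{n+r}{k+r}_r$, i.e. the number of partitions of a set of $n+r$ elements in which $r$ specified elements lie in distinct blocks. *)

theory Defs
  imports Main "HOL-Library.Disjoint_Sets"
begin

definition r_stirling :: "nat \<Rightarrow> nat \<Rightarrow> nat \<Rightarrow> nat" where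
  "r_stirling n k r = card {P. partition_on {1..n} P \<and> card P = k \<and>
      (\<forall>B\<in>P. \<forall>i\<in>{1..r}. \<forall>j\<in>{1..r}. i \<in> B \<and> j \<in> B \<longrightarrow> i = j)}"

definition r_bell :: "nat \<Rightarrow> nat \<Rightarrow> nat" where
  "r_bell n r = (\<Sum>k=0..n. r_stirling (n + r) (k + r) r)"

end

theory Submission
  imports Defs Complex_Main
begin

definition good :: "nat \<Rightarrow> nat set set \<Rightarrow> bool" where
  "good r P = (\<forall>B\<in>P. \<forall>i\<in>{1..r}. \<forall>j\<in>{1..r}. i \<in> B \<and> j \<in> B \<longrightarrow> i = j)"

definition PS :: "nat \<Rightarrow> nat \<Rightarrow> nat \<Rightarrow> nat set set set" where
  "PS m k r = {P. partition_on {1..m} P \<and> card P = k \<and> good r P}"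

lemma r_stirling_PS: "r_stirling m k r = card (PS m k r)"
  by (simp add: r_stirling_def PS_def good_def)

lemma finite_PS: "finite (PS m k r)"
proof (rule finite_subset)
  show "PS m k r \<subseteq> Pow (Pow {1..m})"
    by (auto simp: PS_def partition_on_def)
qed simp

lemma PS_base: "PS r k r = (if k = r then {(\<lambda>i. {i}) ` {1..r}} else {})"
proof -
  have 1: "P = (\<lambda>i. {i}) ` {1..r}" if "partition_on {1..r} P" "good r P" for P
  proof -
    have sing: "\<exists>i\<in>{1..r}. B = {i}" if "B \<in> P" for B
    proof -
      from that \<open>partition_on {1..r} P\<close> have "B \<subseteq> {1..r}" "B \<noteq> {}"
        by (auto simp: partition_on_def)
      then obtain i where i: "i \<in> B" by blast
      have "\<forall>j\<in>B. j = i" using \<open>good r P\<close> \<open>B \<in> P\<close> i \<open>B \<subseteq> {1..r}\<close>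
        unfolding good_def by blast
      then show ?thesis using i \<open>B \<subseteq> {1..r}\<close> by blast
    qed
    show ?thesis
    proof
      show "P \<subseteq> (\<lambda>i. {i}) ` {1..r}" using sing by blast
      show "(\<lambda>i. {i}) ` {1..r} \<subseteq> P"
      proof
        fix X assume "X \<in> (\<lambda>i. {i}) ` {1..r}"
        then obtain i where i: "i \<in> {1..r}" "X = {i}" by blast
        then have "i \<in> \<Union>P" using that(1) by (auto simp: partition_on_def)
        then obtain B where "B \<in> P" "i \<in> B" by blast
        then show "X \<in> P" using sing i by fastforce
      qed
    qed
  qed
  have 2: "card ((\<lambda>i. {i}) ` {1..r}) = r"
    by (subst card_image) (auto simp: inj_on_def)
  have 3: "(\<lambda>i. {i}) ` {1..r} \<in> PS r r r"
    using 2 by (auto simp: PS_def good_def partition_on_singletons)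
  show ?thesis
    using 1 2 3 by (auto simp: PS_def)
qed

lemma PS_zero: "PS (Suc m) 0 r = {}"
proof -
  have "False" if "partition_on {1..Suc m} P" "card P = 0" for P :: "nat set set"
  proof -
    have "finite P" using that(1) by (rule finite_elements[rotated]) simp
    then have "P = {}" using that(2) by simp
    then show False using that(1) by (auto simp: partition_on_def)
  qed
  then show ?thesis by (auto simp: PS_def)
qed

lemma good_sub: "good r P \<Longrightarrow> P' \<subseteq> P \<Longrightarrow> good r P'"
  unfolding good_def by blast
lemma good_insert: "good r Q \<Longrightarrow> (\<And>i j. i \<in> {1..r} \<Longrightarrow> j \<in> {1..r} \<Longrightarrow> i \<in> X \<Longrightarrow> j \<in> X \<Longrightarrow> i = j) \<Longrightarrow> good r (insert X Q)"
  unfolding good_def by blast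
lemma good_sing: "good r Q \<Longrightarrow> good r (insert {a} Q)"
  by (rule good_insert) auto
lemma good_ins_big: assumes "good r Q" "B \<in> Q" "r < a" shows "good r (insert (insert a B) (Q - {B}))"
proof (rule good_insert)
  show "good r (Q - {B})" using assms(1) by (rule good_sub) auto
  fix i j assume "i \<in> {1..r}" "j \<in> {1..r}" "i \<in> insert a B" "j \<in> insert a B"
  then have "i \<in> B" "j \<in> B" using assms(3) by auto
  then show "i = j" using assms(1,2) \<open>i \<in> {1..r}\<close> \<open>j \<in> {1..r}\<close> unfolding good_def by blast
qed
lemma good_del: assumes "good r P" "C \<in> P" shows "good r (insert (C - {a}) (P - {C}))"
proof (rule good_insert)
  show "good r (P - {C})" using assms(1) by (rule good_sub) auto
  fix i j assume "i \<in> {1..r}" "j \<in> {1..r}" "i \<in> C - {a}" "j \<in> C - {a}"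
  then show "i = j" using assms(1,2) unfolding good_def by blast
qed

lemma finP: "partition_on {1..(m::nat)} P \<Longrightarrow> finite P"
  using finite_elements[of "{1..m}" P] by simp

lemma finPS: "P \<in> PS m k r \<Longrightarrow> finite P"
  unfolding PS_def using finP by blast

lemma L1: assumes "partition_on A P" "{a} \<in> P" shows "partition_on (A - {a}) (P - {{a}})"
proof -
  have U: "\<Union>P = A" "disjoint P" "{} \<notin> P" using assms(1) by (auto simp: partition_on_def)
  have na: "a \<notin> X" if "X\<in>P" "X\<noteq>{a}" for X
    using disjointD[OF U(2) that(1) assms(2)] that(2) by auto
  show ?thesis
  proof (rule partition_onI)
    show "\<Union>(P - {{a}}) = A - {a}" using U(1) na assms(2) by auto
    show "disjnt p q" if "p \<in> P - {{a}}" "q \<in> P - {{a}}" "p \<noteq> q" for p q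
      using U(2) that unfolding disjoint_def disjnt_def by auto
    show "{} \<notin> P - {{a}}" using U(3) by auto
  qed
qed
lemma L2: assumes "partition_on A Q" "a \<notin> A" shows "partition_on (insert a A) (insert {a} Q)"
proof -
  have U: "\<Union>Q = A" "disjoint Q" "{} \<notin> Q" using assms(1) by (auto simp: partition_on_def)
  show ?thesis
  proof (rule partition_onI)
    show "\<Union>(insert {a} Q) = insert a A" using U(1) by auto
    show "disjnt p q" if "p \<in> insert {a} Q" "q \<in> insert {a} Q" "p \<noteq> q" for p q
      using U assms(2) that unfolding disjoint_def disjnt_def by auto
    show "{} \<notin> insert {a} Q" using U(3) by auto
  qed
qed
lemma L3: assumes "partition_on A Q" "B \<in> Q" "a \<notin> A"
  shows "partition_on (insert a A) (insert (insert a B) (Q - {B}))"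
proof -
  have U: "\<Union>Q = A" "disjoint Q" "{} \<notin> Q" using assms(1) by (auto simp: partition_on_def)
  show ?thesis
  proof (rule partition_onI)
    show "\<Union>(insert (insert a B) (Q - {B})) = insert a A" using U(1) assms(2) by auto
    show "disjnt p q" if "p \<in> insert (insert a B) (Q - {B})" "q \<in> insert (insert a B) (Q - {B})" "p \<noteq> q" for p q
    proof -
      have d: "X \<inter> Y = {}" if "X \<in> Q" "Y \<in> Q" "X \<noteq> Y" for X Y using U(2) that unfolding disjoint_def by auto
      have nX: "a \<notin> X" if "X \<in> Q" for X using U(1) assms(3) that by auto
      show ?thesis using that d nX assms(2) unfolding disjnt_def by auto
    qed
    show "{} \<notin> insert (insert a B) (Q - {B})" using U(3) by auto
  qed
qed
lemma L4: assumes "partition_on A P" "C \<in> P" "a \<in> C" "C \<noteq> {a}"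
  shows "partition_on (A - {a}) (insert (C - {a}) (P - {C}))"
proof -
  have U: "\<Union>P = A" "disjoint P" "{} \<notin> P" using assms(1) by (auto simp: partition_on_def)
  have d: "X \<inter> Y = {}" if "X \<in> P" "Y \<in> P" "X \<noteq> Y" for X Y using U(2) that unfolding disjoint_def by auto
  have nX: "a \<notin> X" if "X \<in> P" "X \<noteq> C" for X using d[OF that(1) assms(2) that(2)] assms(3) by auto
  show ?thesis
  proof (rule partition_onI)
    show "\<Union>(insert (C - {a}) (P - {C})) = A - {a}" using U(1) assms(2) nX by auto
    show "disjnt p q" if "p \<in> insert (C - {a}) (P - {C})" "q \<in> insert (C - {a}) (P - {C})" "p \<noteq> q" for p q
      using that d assms(2) unfolding disjnt_def by auto
    show "{} \<notin> insert (C - {a}) (P - {C})" using U(3) assms(3,4) by auto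
  qed
qed

lemma PS_rec:
  assumes "r \<le> m" "k \<ge> 1"
  shows "card (PS (Suc m) k r) = k * card (PS m k r) + card (PS m (k-1) r)"
proof -
  define a where "a = Suc m"
  define A1 where "A1 = {P \<in> PS (Suc m) k r. {a} \<in> P}"
  define A2 where "A2 = {P \<in> PS (Suc m) k r. {a} \<notin> P}"
  have split: "PS (Suc m) k r = A1 \<union> A2" "A1 \<inter> A2 = {}" by (auto simp: A1_def A2_def)
  have fin1: "finite A1" "finite A2" using finite_PS[of "Suc m" k r]
    by (auto simp: A1_def A2_def)
  have ra: "r < a" using assms by (simp add: a_def)
  have Ua: "{1..Suc m} = insert a {1..m}" "a \<notin> {1..m}" by (auto simp: a_def)
  have c1: "card A1 = card (PS m (k-1) r)"
  proof -
    have "bij_betw (insert {a}) (PS m (k-1) r) A1"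
    proof (rule bij_betw_imageI)
      show "inj_on (insert {a}) (PS m (k-1) r)"
      proof (rule inj_onI)
        fix Q Q' assume Q: "Q \<in> PS m (k-1) r" "Q' \<in> PS m (k-1) r" "insert {a} Q = insert {a} Q'"
        have "{a} \<notin> Q" "{a} \<notin> Q'" using Q(1,2) Ua by (auto simp: PS_def partition_on_def)
        then show "Q = Q'" using Q(3) by (metis insert_ident)
      qed
      show "insert {a} ` PS m (k-1) r = A1"
      proof
        show "insert {a} ` PS m (k-1) r \<subseteq> A1"
        proof
          fix X assume "X \<in> insert {a} ` PS m (k-1) r"
          then obtain Q where Q: "Q \<in> PS m (k-1) r" "X = insert {a} Q" by blast
          have fQ: "finite Q" using Q(1) by (rule finPS)
          have na: "{a} \<notin> Q" "a \<notin> \<Union>Q" using Q(1) Ua by (auto simp: PS_def partition_on_def)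
          have "partition_on {1..Suc m} X"
            using L2[of "{1..m}" Q a] Q Ua by (simp add: PS_def)
          moreover have "card X = k" using Q na fQ assms(2) by (simp add: PS_def)
          moreover have "good r X" using Q good_sing by (simp add: PS_def)
          ultimately show "X \<in> A1" using Q by (simp add: A1_def PS_def)
        qed
        show "A1 \<subseteq> insert {a} ` PS m (k-1) r"
        proof
          fix P assume P: "P \<in> A1"
          have fP: "finite P" using P by (auto simp: A1_def intro: finPS)
          have "P - {{a}} \<in> PS m (k-1) r"
          proof -
            have pa: "partition_on {1..Suc m} P" "{a} \<in> P" "good r P" "card P = k" using P by (auto simp: A1_def PS_def)
            have e: "{1..m} = {1..Suc m} - {a}" using Ua by auto
            have "partition_on {1..m} (P - {{a}})"
              unfolding e by (rule L1[OF pa(1,2)])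
            moreover have "card (P - {{a}}) = k - 1" using pa fP by simp
            moreover have "good r (P - {{a}})" using pa(3) by (rule good_sub) auto
            ultimately show ?thesis by (simp add: PS_def)
          qed
          moreover have "P = insert {a} (P - {{a}})" using P by (auto simp: A1_def)
          ultimately show "P \<in> insert {a} ` PS m (k-1) r" by blast
        qed
      qed
    qed
    then show ?thesis by (simp add: bij_betw_same_card)
  qed
  define X where "X = (SIGMA Q:PS m k r. Q)"
  define f where "f = (\<lambda>(Q, B). insert (insert a B) (Q - {B}))"
  have cX: "card X = k * card (PS m k r)"
  proof -
    have "card X = (\<Sum>Q\<in>PS m k r. card Q)"
      unfolding X_def
      by (rule card_SigmaI[OF finite_PS]) (auto intro: finPS)
    also have "\<dots> = (\<Sum>Q\<in>PS m k r. k)" by (rule sum.cong) (auto simp: PS_def)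
    finally show ?thesis by simp
  qed
  have c2: "card A2 = card X"
  proof -
    have "bij_betw f X A2"
    proof (rule bij_betw_imageI)
      show "inj_on f X"
      proof (rule inj_onI)
        fix x y assume xy: "x \<in> X" "y \<in> X" "f x = f y"
        obtain Q B where x: "x = (Q, B)" by (cases x)
        obtain Q' B' where y: "y = (Q', B')" by (cases y)
        have Q: "partition_on {1..m} Q" "B \<in> Q" "partition_on {1..m} Q'" "B' \<in> Q'"
          using xy x y by (auto simp: X_def PS_def)
        have naQ: "a \<notin> \<Union>Q" "a \<notin> \<Union>Q'" using Q Ua by (auto simp: partition_on_def)
        have eq: "insert (insert a B) (Q - {B}) = insert (insert a B') (Q' - {B'})"
          using xy(3) x y by (simp add: f_def)
        have "insert a B \<in> insert (insert a B') (Q' - {B'})" using eq by blast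
        then have "insert a B = insert a B'" using naQ by auto
        then have BB: "B = B'" using naQ Q by (metis UnionI insert_ident)
        have "Q - {B} = Q' - {B'}"
        proof -
          have "insert a B \<notin> Q - {B}" "insert a B' \<notin> Q' - {B'}" using naQ by auto
          then show ?thesis using eq \<open>insert a B = insert a B'\<close>
            by (metis insert_ident)
        qed
        then have "Q = Q'" using BB Q by (metis insert_Diff)
        then show "x = y" using x y BB by simp
      qed
      show "f ` X = A2"
      proof
        show "f ` X \<subseteq> A2"
        proof
          fix P assume "P \<in> f ` X"
          then obtain Q B where QB: "Q \<in> PS m k r" "B \<in> Q" "P = insert (insert a B) (Q - {B})"
            by (auto simp: X_def f_def)
          have pQ: "partition_on {1..m} Q" "card Q = k" "good r Q" using QB by (auto simp: PS_def)
          have fQ: "finite Q" using pQ(1) by (rule finP)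
          have naQ: "a \<notin> \<Union>Q" using pQ Ua by (auto simp: partition_on_def)
          have Bne: "B \<noteq> {}" using pQ(1) QB(2) by (auto simp: partition_on_def)
          have "partition_on {1..Suc m} P"
            using L3[OF pQ(1) QB(2) Ua(2)] QB(3) Ua(1) by simp
          moreover have "card P = k"
          proof -
            have "insert a B \<notin> Q - {B}" using naQ by auto
            then have "card P = card (Q - {B}) + 1" using QB(3) fQ by simp
            also have "\<dots> = k" using QB(2) fQ pQ(2) assms(2)
              by (simp add: card_Diff_singleton)
            finally show ?thesis .
          qed
          moreover have "good r P"
            using good_ins_big[OF pQ(3) QB(2) ra] QB(3) by simp
          moreover have "{a} \<notin> P"
            using QB(2,3) naQ Bne by blast
          ultimately show "P \<in> A2" by (simp add: A2_def PS_def)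
        qed
        show "A2 \<subseteq> f ` X"
        proof
          fix P assume P: "P \<in> A2"
          have pP: "partition_on {1..Suc m} P" "card P = k" "good r P" "{a} \<notin> P"
            using P by (auto simp: A2_def PS_def)
          have fP: "finite P" using pP(1) by (rule finP)
          obtain C where C: "C \<in> P" "a \<in> C" using pP(1) Ua by (auto simp: partition_on_def)
          define B where "B = C - {a}"
          define Q where "Q = insert B (P - {C})"
          have Cna: "C \<noteq> {a}" using C pP(4) by auto
          have Bne: "B \<noteq> {}" using C Cna unfolding B_def by blast
          have BnP: "B \<notin> P"
          proof
            assume "B \<in> P"
            moreover have "B \<noteq> C" using C by (auto simp: B_def)
            moreover have "B \<inter> C \<noteq> {}" using Bne by (auto simp: B_def)
            ultimately show False using disjointD[OF partition_onD2[OF pP(1)] _ C(1)] by blast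
          qed
          have e: "{1..m} = {1..Suc m} - {a}" using Ua by auto
          from Cna have "partition_on {1..m} Q"
            unfolding e Q_def B_def using L4[OF pP(1) C] by simp
          moreover have "card Q = k"
          proof -
            have "B \<notin> P - {C}" using BnP by simp
            then have "card Q = card (P - {C}) + 1" using fP by (simp add: Q_def)
            also have "\<dots> = k" using C fP pP(2) assms(2)
              by (simp add: card_Diff_singleton)
            finally show ?thesis .
          qed
          moreover have "good r Q"
            using good_del[OF pP(3) C(1)] unfolding Q_def B_def .
          ultimately have QX: "(Q, B) \<in> X" by (simp add: X_def PS_def Q_def)
          have "f (Q, B) = P"
          proof -
            have "Q - {B} = P - {C}" using BnP by (auto simp: Q_def)
            moreover have "insert a B = C" using C by (auto simp: B_def)
            ultimately show ?thesis using C by (simp add: f_def insert_absorb)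
          qed
          then show "P \<in> f ` X" using QX by (metis image_eqI)
        qed
      qed
    qed
    then show ?thesis by (simp add: bij_betw_same_card)
  qed
  have "card (PS (Suc m) k r) = card A1 + card A2"
    using split fin1 by (simp add: card_Un_disjoint)
  then show ?thesis using c1 c2 cX by simp
qed


lemma rs_rec: "r \<le> m \<Longrightarrow> 1 \<le> k \<Longrightarrow> r_stirling (Suc m) k r = k * r_stirling m k r + r_stirling m (k-1) r"
  by (simp add: r_stirling_PS PS_rec)

lemma rs_rec0: "r_stirling (Suc m) 0 r = 0"
  by (simp add: r_stirling_PS PS_zero)

lemma rs_base: "r_stirling r k r = (if k = r then 1 else 0)"
proof -
  have "card ((\<lambda>i. {i}) ` {1..r}) = r" by (subst card_image) (auto simp: inj_on_def)
  then show ?thesis by (simp add: r_stirling_PS PS_base)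
qed

lemma rs_zero_low: "r \<le> m \<Longrightarrow> k < r \<Longrightarrow> r_stirling m k r = 0"
proof (induction m arbitrary: k rule: dec_induct)
  case base
  then show ?case by (simp add: rs_base)
next
  case (step m)
  show ?case
  proof (cases "k = 0")
    case True then show ?thesis by (simp add: rs_rec0)
  next
    case False
    then show ?thesis using step by (simp add: rs_rec)
  qed
qed

lemma rs_zero_high: "r \<le> m \<Longrightarrow> m < k \<Longrightarrow> r_stirling m k r = 0"
proof (induction m arbitrary: k rule: dec_induct)
  case base
  then show ?case by (simp add: rs_base)
next
  case (step m)
  then show ?case by (simp add: rs_rec)
qed

primrec ff :: "real \<Rightarrow> nat \<Rightarrow> real" where
  "ff x 0 = 1"
| "ff x (Suc k) = ff x k * (x - real k)"

lemma ff_step: "(x + real r) * ff x k = ff x (Suc k) + (real k + real r) * ff x k"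
  by (simp add: algebra_simps)

definition cc :: "nat \<Rightarrow> nat \<Rightarrow> nat \<Rightarrow> real" where
  "cc r n k = real (r_stirling (n + r) (k + r) r)"

lemma cc_high: "n < k \<Longrightarrow> cc r n k = 0"
  unfolding cc_def by (simp add: rs_zero_high)

lemma cc0: "0 < r \<Longrightarrow> cc r (Suc n) 0 = real r * cc r n 0"
proof -
  assume r: "0 < r"
  have "r_stirling (Suc (n + r)) r r = r * r_stirling (n + r) r r + r_stirling (n + r) (r - 1) r"
    using r by (simp add: rs_rec)
  also have "r_stirling (n + r) (r - 1) r = 0" using r by (simp add: rs_zero_low)
  finally show ?thesis by (simp add: cc_def)
qed

lemma ccS: "cc r (Suc n) (Suc k) = (real (Suc k) + real r) * cc r n (Suc k) + cc r n k"
proof -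
  have eq: "r_stirling (Suc (n + r)) (Suc k + r) r = (Suc k + r) * r_stirling (n + r) (Suc k + r) r + r_stirling (n + r) (k + r) r"
    using rs_rec[of r "n + r" "Suc k + r"] by simp
  have "cc r (Suc n) (Suc k) = real (r_stirling (Suc (n + r)) (Suc k + r) r)"
    by (simp add: cc_def)
  also have "\<dots> = real ((Suc k + r) * r_stirling (n + r) (Suc k + r) r + r_stirling (n + r) (k + r) r)"
    by (simp only: eq)
  also have "\<dots> = (real (Suc k) + real r) * cc r n (Suc k) + cc r n k"
    by (simp only: cc_def of_nat_add of_nat_mult)
  finally show ?thesis .
qed

lemma ident: "0 < r \<Longrightarrow> n < N \<Longrightarrow> (x + real r) ^ n = (\<Sum>k<N. cc r n k * ff x k)"
proof (induction n arbitrary: N)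
  case 0
  have "(\<Sum>k<N. cc r 0 k * ff x k) = (\<Sum>k<N. (if k = 0 then 1 else 0))"
    by (rule sum.cong) (simp_all add: cc_def rs_base)
  then show ?case using 0 by simp
next
  case (Suc n)
  obtain M where M: "N = Suc M" "n < M" using Suc.prems(2) by (cases N) auto
  have IH: "(x + real r) ^ n = (\<Sum>k<Suc M. cc r n k * ff x k)" using Suc.prems(1) M by (intro Suc.IH) simp_all
  have "(x + real r) ^ Suc n = (\<Sum>k<Suc M. cc r n k * ((x + real r) * ff x k))"
    by (simp add: IH sum_distrib_left algebra_simps)
  also have "\<dots> = (\<Sum>k<Suc M. cc r n k * ff x (Suc k)) + (\<Sum>k<Suc M. (real k + real r) * cc r n k * ff x k)"
    unfolding sum.distrib[symmetric] by (rule sum.cong) (simp_all add: algebra_simps)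
  also have "(\<Sum>k<Suc M. cc r n k * ff x (Suc k)) = (\<Sum>k<M. cc r n k * ff x (Suc k))"
    using M by (simp add: cc_high)
  also have "(\<Sum>k<Suc M. (real k + real r) * cc r n k * ff x k) = real r * cc r n 0 + (\<Sum>k<M. (real (Suc k) + real r) * cc r n (Suc k) * ff x (Suc k))"
    by (subst sum.lessThan_Suc_shift) simp
  also have "(\<Sum>k<M. cc r n k * ff x (Suc k)) + (real r * cc r n 0 + (\<Sum>k<M. (real (Suc k) + real r) * cc r n (Suc k) * ff x (Suc k)))
     = cc r (Suc n) 0 * ff x 0 + (\<Sum>k<M. cc r (Suc n) (Suc k) * ff x (Suc k))"
  proof -
    have "(\<Sum>k<M. cc r n k * ff x (Suc k)) + (\<Sum>k<M. (real (Suc k) + real r) * cc r n (Suc k) * ff x (Suc k))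
       = (\<Sum>k<M. cc r (Suc n) (Suc k) * ff x (Suc k))"
      unfolding sum.distrib[symmetric] by (rule sum.cong) (simp_all only: ccS algebra_simps)
    then show ?thesis using cc0[OF Suc.prems(1), of n] by simp
  qed
  also have "\<dots> = (\<Sum>k<N. cc r (Suc n) k * ff x k)"
    by (simp only: M(1) sum.lessThan_Suc_shift)
  finally show ?case .
qed

lemma ff_zero: "j < k \<Longrightarrow> ff (real j) k = 0"
proof (induction k)
  case 0 then show ?case by simp
next
  case (Suc k)
  then show ?case by (cases "j < k") auto
qed

lemma ff_fact: "k \<le> m \<Longrightarrow> ff (real m) k = fact m / fact (m - k)"
proof (induction k)
  case 0 then show ?case by simp
next
  case (Suc k)
  have mk: "m - k = Suc (m - Suc k)" using Suc.prems by simp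
  have "ff (real m) (Suc k) = fact m / fact (m - k) * real (m - k)"
    using Suc by (simp add: of_nat_diff)
  also have "\<dots> = fact m / fact (m - Suc k)"
    unfolding mk by (simp add: field_simps del: of_nat_Suc)
  finally show ?case .
qed

lemma dob_k: "(\<lambda>j. ff (real j) k / fact j) sums exp 1"
proof -
  have e: "(\<lambda>j. 1 / fact j :: real) sums exp 1"
    using exp_converges[of "1::real"] by (simp add: divide_inverse)
  have "(\<lambda>j. ff (real (j + k)) k / fact (j + k)) = (\<lambda>j. 1 / fact j :: real)"
    by (rule ext) (simp add: ff_fact[of k "_ + k"] del: of_nat_add)
  with e have "(\<lambda>j. ff (real (j + k)) k / fact (j + k)) sums exp 1" by simp
  then show ?thesis
    by (subst (asm) sums_zero_iff_shift) (simp_all add: ff_zero)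
qed


lemma bell_cc: "real (r_bell n r) = (\<Sum>k<Suc n. cc r n k)"
  by (simp add: r_bell_def cc_def atLeast0AtMost lessThan_Suc_atMost)

lemma dob: assumes "0 < r"
  shows "(\<lambda>j. (real j + real r) ^ n / fact j) sums (exp 1 * real (r_bell n r))"
proof -
  have eq: "(real j + real r) ^ n / fact j = (\<Sum>k<Suc n. cc r n k * (ff (real j) k / fact j))" for j
    using ident[OF assms, of n "Suc n" "real j"] by (simp add: sum_divide_distrib[symmetric] del: sum.lessThan_Suc)
  have "(\<lambda>j. \<Sum>k<Suc n. cc r n k * (ff (real j) k / fact j)) sums (\<Sum>k<Suc n. cc r n k * exp 1)"
    by (rule sums_sum) (rule sums_mult[OF dob_k])
  moreover have "(\<Sum>k<Suc n. cc r n k * exp 1) = exp 1 * real (r_bell n r)"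
    by (simp add: bell_cc sum_distrib_left mult.commute del: sum.lessThan_Suc)
  ultimately show ?thesis unfolding eq by simp
qed

lemma sums_pos: "(\<And>j. 0 < f j) \<Longrightarrow> f sums (s::real) \<Longrightarrow> 0 < s"
  using suminf_pos sums_summable sums_unique by metis

lemma term_ineq:
  fixes a y t :: real
  assumes "0 \<le> a" "0 < t"
  shows "2 * (a * y) \<le> t * a + a * y * y / t"
proof -
  have "t + y * y / t - 2 * y = (t - y)^2 / t" using assms(2) by (simp add: field_simps power2_eq_square)
  also have "\<dots> \<ge> 0" using assms(2) by simp
  finally have "2 * y \<le> t + y * y / t" by simp
  then have "a * (2 * y) \<le> a * (t + y * y / t)" using assms(1) by (rule mult_left_mono)
  then show ?thesis by (simp add: algebra_simps)
qed

theorem main_real: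
  assumes r: "0 < r"
  shows "real (r_bell (Suc p) r) ^ 2 \<le> real (r_bell p r) * real (r_bell (Suc (Suc p)) r)"
proof -
  define e where "e = (exp 1 :: real)"
  define U where "U = e * real (r_bell p r)"
  define W where "W = e * real (r_bell (Suc p) r)"
  define V where "V = e * real (r_bell (Suc (Suc p)) r)"
  define a where "a = (\<lambda>j::nat. (real j + real r) ^ p / fact j)"
  have sU: "a sums U" using dob[OF r, of p] by (simp add: a_def U_def e_def)
  have sW: "(\<lambda>j. a j * (real j + real r)) sums W" using dob[OF r, of "Suc p"]
    by (simp add: a_def W_def e_def algebra_simps)
  have sV: "(\<lambda>j. a j * (real j + real r) * (real j + real r)) sums V" using dob[OF r, of "Suc (Suc p)"]
    by (simp add: a_def V_def e_def algebra_simps)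
  have apos: "0 < a j" for j using r by (simp add: a_def)
  have Wpos: "0 < W" by (rule sums_pos[OF _ sW]) (use apos r in simp)
  have Vpos: "0 < V" by (rule sums_pos[OF _ sV]) (use apos r in simp)
  define t where "t = V / W"
  have tpos: "0 < t" using Wpos Vpos by (simp add: t_def)
  have "2 * W \<le> t * U + V / t"
  proof (rule sums_le)
    show "(\<lambda>j. 2 * (a j * (real j + real r))) sums (2 * W)" by (rule sums_mult[OF sW])
    show "(\<lambda>j. t * a j + a j * (real j + real r) * (real j + real r) / t) sums (t * U + V / t)"
      by (rule sums_add[OF sums_mult[OF sU] sums_divide[OF sV]])
    show "2 * (a j * (real j + real r)) \<le> t * a j + a j * (real j + real r) * (real j + real r) / t" for j
      using term_ineq[OF less_imp_le[OF apos] tpos] .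
  qed
  then have "2 * W \<le> V / W * U + W" using Wpos Vpos by (simp add: t_def)
  then have "W \<le> V / W * U" by simp
  then have "W * W \<le> V * U" using Wpos by (simp add: field_simps)
  then have "e^2 * real (r_bell (Suc p) r) ^ 2 \<le> e^2 * (real (r_bell p r) * real (r_bell (Suc (Suc p)) r))"
    by (simp add: U_def V_def W_def power2_eq_square algebra_simps)
  moreover have "0 < e^2" by (simp add: e_def)
  ultimately show ?thesis by simp
qed

theorem mainTheorem6:
  fixes n r :: nat
  assumes "r > 0" and "n \<ge> 1"
  shows "r_bell (n - 1) r * r_bell (n + 1) r \<ge> (r_bell n r)\<^sup>2"
proof -
  obtain p where n: "n = Suc p" using assms(2) by (cases n) auto
  have "real (r_bell (Suc p) r) ^ 2 \<le> real (r_bell p r) * real (r_bell (Suc (Suc p)) r)"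
    by (rule main_real[OF assms(1)])
  then have "real ((r_bell (Suc p) r) ^ 2) \<le> real (r_bell p r * r_bell (Suc (Suc p)) r)"
    by simp
  then show ?thesis unfolding n of_nat_le_iff by simp
qed

end
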